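(* Let $k\in\mathbb{Z}^+$, let $1<\gamma<k$, and let $(a_n)_{n=1}^\infty$ be a sequence of non-negative real numbers such that for all $n,m\in\mathbb{Z}^+$: (i) $a_{n+m}\leq a_na_m$, and (ii) $a_{kn}\leq a_n^{\gamma}$. Then for every $\tau>\log_k(\gamma)$ one has $a_n=O(e^{n^\tau})$ as $n\to\infty$. *)

theory Defs
  imports "HOL-Analysis.Analysis" "HOL-Library.Landau_Symbols"
begin

end

theory Submission
  imports Defs "HOL-Real_Asymp.Real_Asymp"
begin

theorem lemma3p4:
  fixes k :: nat and \<gamma> :: real and a :: "nat \<Rightarrow> real"
  assumes "k \<ge> 1"
    and "1 < \<gamma>" and "\<gamma> < real k"
    and "\<And>n. n \<ge> 1 \<Longrightarrow> a n \<ge> 0"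
    and "\<And>n m. n \<ge> 1 \<Longrightarrow> m \<ge> 1 \<Longrightarrow> a (n + m) \<le> a n * a m"
    and "\<And>n. n \<ge> 1 \<Longrightarrow> a (k * n) \<le> a n powr \<gamma>"
  shows "\<forall>\<tau>::real. \<tau> > log (real k) \<gamma> \<longrightarrow>
           a \<in> O[sequentially](\<lambda>n. exp (real n powr \<tau>))"
proof (intro allI impI)
  fix \<tau> :: real
  assume tau: "\<tau> > log (real k) \<gamma>"
  define \<alpha> where "\<alpha> = log (real k) \<gamma>"
  have k2: "k \<ge> 2" using assms(2,3) by linarith
  have kal: "real k powr \<alpha> = \<gamma>" unfolding \<alpha>_def using k2 assms(2) by simp
  have al0: "\<alpha> > 0" unfolding \<alpha>_def using k2 assms(2) by simp
  define B where "B = max 1 (Max (a ` {1..<k}))"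
  have B1: "B \<ge> 1" unfolding B_def by simp
  have Bj: "a j \<le> B" if "1 \<le> j" "j < k" for j
  proof -
    have "a j \<le> Max (a ` {1..<k})" using that by (intro Max_ge) auto
    thus ?thesis unfolding B_def by simp
  qed
  define L where "L = ln B"
  have L0: "L \<ge> 0" unfolding L_def using B1 by simp
  define c where "c = 1 / (\<gamma> - 1)"
  have c0: "c > 0" unfolding c_def using assms(2) by simp
  have cg: "\<gamma> * c - 1 = c" unfolding c_def using assms(2) by (simp add: field_simps)
  define D where "D = 1 + c"
  have main: "n \<ge> 1 \<Longrightarrow> a n \<le> exp (L * (D * real n powr \<alpha> - c))" for n
  proof (induction n rule: less_induct)
    case (less n)
    show ?case
    proof (cases "n < k")
      case True
      have "real n powr \<alpha> \<ge> 1" using less.prems al0 by (simp add: ge_one_powr_ge_zero)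
      hence "D * real n powr \<alpha> - c \<ge> 1" unfolding D_def using c0
        by (smt (verit, best) mult_le_cancel_left1)
      hence "L * (D * real n powr \<alpha> - c) \<ge> L" using L0
        by (simp add: mult_le_cancel_left1)
      hence "exp (L * (D * real n powr \<alpha> - c)) \<ge> exp L" by simp
      moreover have "exp L = B" unfolding L_def using B1 by simp
      ultimately show ?thesis using Bj[OF less.prems True] by simp
    next
      case False
      define q where "q = n div k"
      define r where "r = n mod k"
      have n_eq: "n = k * q + r" unfolding q_def r_def by simp
      have q1: "q \<ge> 1" unfolding q_def using False k2
        by (metis div_greater_zero_iff not_less One_nat_def Suc_leI le_trans one_le_numeral k2 zero_less_iff_neq_zero)
      have qn: "q < n" unfolding q_def using k2 less.prems by simp
      have IH: "a q \<le> exp (L * (D * real q powr \<alpha> - c))" using less.IH[OF qn q1] .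
      have aq0: "a q \<ge> 0" using assms(4) q1 by simp
      have pw: "real (k * q) powr \<alpha> = \<gamma> * real q powr \<alpha>"
        by (simp add: powr_mult kal)
      have akq: "a (k * q) \<le> exp (L * (D * real q powr \<alpha> - c)) powr \<gamma>"
        using assms(6)[OF q1] powr_mono2[OF _ aq0 IH, of \<gamma>] assms(2) by simp
      also have "\<dots> = exp (L * (D * real (k*q) powr \<alpha> - \<gamma> * c))"
        unfolding exp_powr_real pw by (simp add: algebra_simps)
      finally have akq: "a (k * q) \<le> exp (L * (D * real (k*q) powr \<alpha> - \<gamma> * c))" .
      have mono: "real (k*q) powr \<alpha> \<le> real n powr \<alpha>"
        using n_eq al0 by (intro powr_mono2) auto
      have DL: "L * D * real (k*q) powr \<alpha> \<le> L * D * real n powr \<alpha>"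
        using mono L0 D_def c0 by (intro mult_left_mono) auto
      show ?thesis
      proof (cases "r = 0")
        case True
        have "L * (D * real (k*q) powr \<alpha> - \<gamma> * c) \<le> L * (D * real n powr \<alpha> - c)"
          using True n_eq L0 c0 assms(2)
          by (simp add: right_diff_distrib mult_left_mono)
        hence "exp (L * (D * real (k*q) powr \<alpha> - \<gamma> * c)) \<le> exp (L * (D * real n powr \<alpha> - c))"
          by simp
        moreover have "n = k * q" using True n_eq by simp
        ultimately show ?thesis using akq by (metis order_trans)
      next
        case False
        have r1: "r \<ge> 1" "r < k" using False k2 unfolding r_def by auto
        have kq1: "k * q \<ge> 1" using q1 k2 by simp
        have "a n \<le> a (k*q) * a r" using assms(5)[OF kq1 r1(1)] n_eq by simp
        also have "\<dots> \<le> exp (L * (D * real (k*q) powr \<alpha> - \<gamma> * c)) * B"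
          using akq Bj[OF r1] assms(4)[OF r1(1)] by (intro mult_mono) auto
        also have "B = exp L" unfolding L_def using B1 by simp
        also have "exp (L * (D * real (k*q) powr \<alpha> - \<gamma> * c)) * exp L
            = exp (L * (D * real (k*q) powr \<alpha> - (\<gamma> * c - 1)))"
          by (simp add: exp_add[symmetric] algebra_simps)
        also have "\<dots> = exp (L * (D * real (k*q) powr \<alpha> - c))" using cg by simp
        also have "\<dots> \<le> exp (L * (D * real n powr \<alpha> - c))"
          using DL by (simp add: right_diff_distrib algebra_simps)
        finally show ?thesis .
      qed
    qed
  qed
  have ev: "eventually (\<lambda>n::nat. (L * D) * real n powr \<alpha> \<le> real n powr \<tau>) sequentially"
  proof -
    have at: "\<alpha> < \<tau>" using tau unfolding \<alpha>_def .
    show ?thesis using at by real_asymp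
  qed
  show "a \<in> O[sequentially](\<lambda>n. exp (real n powr \<tau>))"
  proof (rule bigoI[where c = 1])
    show "eventually (\<lambda>n. norm (a n) \<le> 1 * norm (exp (real n powr \<tau>))) sequentially"
      using ev eventually_ge_at_top[of "1::nat"]
    proof eventually_elim
      case (elim n)
      have "a n \<le> exp (L * (D * real n powr \<alpha> - c))" using main elim(2) .
      also have "\<dots> \<le> exp (L * D * real n powr \<alpha>)"
        using L0 c0 by (simp add: right_diff_distrib algebra_simps)
      also have "\<dots> \<le> exp (real n powr \<tau>)" using elim(1) by simp
      finally show ?case using assms(4)[OF elim(2)] by simp
    qed
  qed
qed

end
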